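(* In the single-deceiver single-oblivious quadratic setting of the context, let $\mathcal{M}\subset[N]$ be a set of players with $r_{i,1}\neq0$ and $\operatorname{sgn}(r_{i,1})=\operatorname{sgn}(r_{1,1})$ for all $i\in\mathcal{M}$, and suppose $\varepsilon_1r_{1,1}q_1q_3<0$. Then the set $\Omega$ of attainable values is nonempty, and there is a nonempty subset $\Omega^*\subset\Omega$ such that for every $J^{\mathrm{ref}}\in\Omega^*$ there exists $\delta^*\in\Delta_1$ with $J_1(x_{\delta^*})=J^{\mathrm{ref}}$, $\varepsilon_1\frac{d}{d\delta}J_1(x_\delta)\big|_{\delta=\delta^*}<0$, and $$J_i(x_{\delta^*})<J_i(x^* )\qquad\forall i\in\mathcal{M}\cup\{1\}.$$
   Context: Quadratic game: $J_i(x)=\frac12x^\top Q_ix+b_i^\top x+p_i$, $Q_i\in\mathbb{R}^{N\times N}$ symmetric, $b_i\in\mathbb{R}^N$, $p_i\in\mathbb{R}$. $(Q)_{j:}$ = $j$-th row, $(Q)_{:j}$ = $j$-th column, $(b)_j$ = $j$-th entry; $[Q]^{d,1}$ is $Q$ with row $d$ and column $1$ removed, $[Q]^{d,\sim}$ is $Q$ with only row $d$ removed. $\mathcal{Q}$ is the matrix with $m$-th row $(Q_m)_{m:}$, $\mathcal{B}$ the vector with $m$-th entry $(b_m)_m$. Player 1 is the only deceiver and deceives only player $d\neq1$. $\bar{\mathcal{Q}}$ is the $N\times N$ matrix whose only nonzero row is row $d$, equal to $(Q_d)_{1:}$; $\bar{\mathcal{B}}$ the vector whose only nonzero entry is entry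 $d$, equal to $(b_d)_1$. For $\delta\in\mathbb{R}$, $\mathcal{Q}_\delta=\mathcal{Q}+\delta\bar{\mathcal{Q}}$, $\mathcal{B}_\delta=\mathcal{B}+\delta\bar{\mathcal{B}}$. Fix $k>0$; assume $-k\mathcal{Q}$ is Hurwitz and $[\mathcal{Q}]^{d,1}$ is invertible. $x^*=-\mathcal{Q}^{-1}\mathcal{B}$ (the Nash equilibrium); $\Delta_1=\{\delta\in\mathbb{R}:-k\mathcal{Q}_\delta\text{ Hurwitz}\}$; for $\delta\in\Delta_1$, $x_\delta=-\mathcal{Q}_\delta^{-1}\mathcal{B}_\delta$ (the deceptive Nash equilibrium). $\Phi=\begin{bmatrix}1\\-([\mathcal{Q}]^{d,1})^{-1}([\mathcal{Q}]^{d,\sim})_{:1}\end{bmatrix}\in\mathbb{R}^N$; $q_1=-\big((b_d)_1+(Q_d)_{1:}x^*\big)$, $q_2=(Q_d)_{1:}\Phi$, $q_3=(Q_d)_{d:}\Phi$; $r_{i,2}=\frac12\Phi^\top Q_i\Phi$, $r_{i,1}=(Q_ix^*+b_i)^\top\Phi$. Given a nonzero constant $\varepsilon_1$, a value $J^{\mathrm{ref}}\in\mathbb{R}$ is attainable if there exists $\delta^*\in\Delta_1$ with $J_1(x_{\delta^*})=J^{\mathrm{ref}}$ and $\varepsilon_1\frac{d}{d\delta}J_1(x_\delta)\big|_{\delta=\delta^*}<0$; $\Omega$ is the set of attainable values. *)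

theory Defs
  imports Complex_Main
    "Jordan_Normal_Form.Gauss_Jordan_Elimination"
    "Jordan_Normal_Form.Determinant"
    "Jordan_Normal_Form.Char_Poly"
begin

text \<open>Players and coordinates are indexed 0,...,N-1; the paper's player 1 is index 0.
  Q i, b i, p i are the data of player i's quadratic cost.\<close>

definition Jcost :: "(nat \<Rightarrow> real mat) \<Rightarrow> (nat \<Rightarrow> real vec) \<Rightarrow> (nat \<Rightarrow> real) \<Rightarrow> nat \<Rightarrow> real vec \<Rightarrow> real" where
  "Jcost Q b p i x = 1/2 * (x \<bullet> (Q i *\<^sub>v x)) + b i \<bullet> x + p i"

definition calQ :: "nat \<Rightarrow> (nat \<Rightarrow> real mat) \<Rightarrow> real mat" where
  "calQ N Q = mat N N (\<lambda>(m, j). Q m $$ (m, j))"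

definition calB :: "nat \<Rightarrow> (nat \<Rightarrow> real vec) \<Rightarrow> real vec" where
  "calB N b = vec N (\<lambda>m. b m $ m)"

definition barQ :: "nat \<Rightarrow> (nat \<Rightarrow> real mat) \<Rightarrow> nat \<Rightarrow> real mat" where
  "barQ N Q d = mat N N (\<lambda>(m, j). if m = d then Q d $$ (0, j) else 0)"

definition barB :: "nat \<Rightarrow> (nat \<Rightarrow> real vec) \<Rightarrow> nat \<Rightarrow> real vec" where
  "barB N b d = vec N (\<lambda>m. if m = d then b d $ 0 else 0)"

definition calQd :: "nat \<Rightarrow> (nat \<Rightarrow> real mat) \<Rightarrow> nat \<Rightarrow> real \<Rightarrow> real mat" where
  "calQd N Q d \<delta> = calQ N Q + \<delta> \<cdot>\<^sub>m barQ N Q d"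

definition calBd :: "nat \<Rightarrow> (nat \<Rightarrow> real vec) \<Rightarrow> nat \<Rightarrow> real \<Rightarrow> real vec" where
  "calBd N b d \<delta> = calB N b + \<delta> \<cdot>\<^sub>v barB N b d"

definition hurwitz :: "real mat \<Rightarrow> bool" where
  "hurwitz A \<longleftrightarrow> dim_row A = dim_col A \<and>
     (\<forall>ev. eigenvalue (map_mat complex_of_real A) ev \<longrightarrow> Re ev < 0)"

definition matinv :: "real mat \<Rightarrow> real mat" where
  "matinv A = the (mat_inverse A)"

definition xstar :: "nat \<Rightarrow> (nat \<Rightarrow> real mat) \<Rightarrow> (nat \<Rightarrow> real vec) \<Rightarrow> real vec" where
  "xstar N Q b = - (matinv (calQ N Q) *\<^sub>v calB N b)"

definition xdelta :: "nat \<Rightarrow> (nat \<Rightarrow> real mat) \<Rightarrow> (nat \<Rightarrow> real vec) \<Rightarrow> nat \<Rightarrow> real \<Rightarrow> real vec" where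
  "xdelta N Q b d \<delta> = - (matinv (calQd N Q d \<delta>) *\<^sub>v calBd N b d \<delta>)"

definition Delta1 :: "nat \<Rightarrow> (nat \<Rightarrow> real mat) \<Rightarrow> nat \<Rightarrow> real \<Rightarrow> real set" where
  "Delta1 N Q d k = {\<delta>. hurwitz ((- k) \<cdot>\<^sub>m calQd N Q d \<delta>)}"

definition mat_delete_row :: "'a mat \<Rightarrow> nat \<Rightarrow> 'a mat" where
  "mat_delete_row A i = mat (dim_row A - 1) (dim_col A)
     (\<lambda>(r, c). A $$ (if r < i then r else Suc r, c))"

definition Phi :: "nat \<Rightarrow> (nat \<Rightarrow> real mat) \<Rightarrow> nat \<Rightarrow> real vec" where
  "Phi N Q d = vec_of_list [1] @\<^sub>v
     (- (matinv (mat_delete (calQ N Q) d 0) *\<^sub>v col (mat_delete_row (calQ N Q) d) 0))"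

definition q1 :: "nat \<Rightarrow> (nat \<Rightarrow> real mat) \<Rightarrow> (nat \<Rightarrow> real vec) \<Rightarrow> nat \<Rightarrow> real" where
  "q1 N Q b d = - (b d $ 0 + row (Q d) 0 \<bullet> xstar N Q b)"

definition q2 :: "nat \<Rightarrow> (nat \<Rightarrow> real mat) \<Rightarrow> nat \<Rightarrow> real" where
  "q2 N Q d = row (Q d) 0 \<bullet> Phi N Q d"

definition q3 :: "nat \<Rightarrow> (nat \<Rightarrow> real mat) \<Rightarrow> nat \<Rightarrow> real" where
  "q3 N Q d = row (Q d) d \<bullet> Phi N Q d"

definition r2 :: "nat \<Rightarrow> (nat \<Rightarrow> real mat) \<Rightarrow> nat \<Rightarrow> nat \<Rightarrow> real" where
  "r2 N Q d i = 1/2 * (Phi N Q d \<bullet> (Q i *\<^sub>v Phi N Q d))"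

definition r1 :: "nat \<Rightarrow> (nat \<Rightarrow> real mat) \<Rightarrow> (nat \<Rightarrow> real vec) \<Rightarrow> nat \<Rightarrow> nat \<Rightarrow> real" where
  "r1 N Q b d i = (Q i *\<^sub>v xstar N Q b + b i) \<bullet> Phi N Q d"

definition attainable :: "nat \<Rightarrow> (nat \<Rightarrow> real mat) \<Rightarrow> (nat \<Rightarrow> real vec) \<Rightarrow> (nat \<Rightarrow> real) \<Rightarrow> nat \<Rightarrow> real \<Rightarrow> real \<Rightarrow> real \<Rightarrow> bool" where
  "attainable N Q b p d k \<epsilon>1 Jref \<longleftrightarrow>
     (\<exists>\<delta>s \<in> Delta1 N Q d k. Jcost Q b p 0 (xdelta N Q b d \<delta>s) = Jref \<and>
        (\<exists>D. ((\<lambda>\<delta>. Jcost Q b p 0 (xdelta N Q b d \<delta>)) has_real_derivative D) (at \<delta>s) \<and> \<epsilon>1 * D < 0))"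

definition Omega :: "nat \<Rightarrow> (nat \<Rightarrow> real mat) \<Rightarrow> (nat \<Rightarrow> real vec) \<Rightarrow> (nat \<Rightarrow> real) \<Rightarrow> nat \<Rightarrow> real \<Rightarrow> real \<Rightarrow> real set" where
  "Omega N Q b p d k \<epsilon>1 = {Jref. attainable N Q b p d k \<epsilon>1 Jref}"

end

theory Submission
  imports Defs "HOL-Analysis.Elementary_Topology"
begin

lemma det_cont:
  fixes M :: "complex \<Rightarrow> complex mat"
  assumes car: "\<And>z. M z \<in> carrier_mat m m"
    and cont: "\<And>i j. i < m \<Longrightarrow> j < m \<Longrightarrow> continuous_on S (\<lambda>z. M z $$ (i,j))"
  shows "continuous_on S (\<lambda>z. det (M z))"
proof -
  have eq: "(\<lambda>z. det (M z)) = (\<lambda>z. \<Sum>p\<in>{p. p permutes {0..<m}}. signof p * (\<Prod> i=0..<m. M z $$ (i, p i)))"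
    using det_def'[OF car] by auto
  have c: "continuous_on S (\<lambda>z. \<Sum>p\<in>{p. p permutes {0..<m}}. signof p * (\<Prod> i=0..<m. M z $$ (i, p i)))"
  proof (intro continuous_intros)
    fix p i assume "p \<in> {p. p permutes {0..<m}}" "i \<in> {0..<m}"
    then show "continuous_on S (\<lambda>z. M z $$ (i, p i))"
      using cont permutes_in_image by fastforce
  qed
  show ?thesis by (subst eq) (rule c)
qed

lemma eig_bound:
  fixes M :: "complex mat"
  assumes M: "M \<in> carrier_mat n n" and ev: "eigenvalue M l"
  shows "norm l \<le> (\<Sum>i<n. \<Sum>j<n. norm (M$$(i,j)))"
proof -
  obtain v where v: "v \<in> carrier_vec n" "v \<noteq> 0\<^sub>v n" "M *\<^sub>v v = l \<cdot>\<^sub>v v"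
    using ev M unfolding eigenvalue_def eigenvector_def by auto
  have n: "n > 0"
  proof (rule ccontr)
    assume "\<not> n > 0" then have "n = 0" by simp
    then have "v = 0\<^sub>v n" using v(1) by (intro eq_vecI) auto
    then show False using v(2) by simp
  qed
  let ?S = "(\<lambda>j. norm (v$j)) ` {..<n}"
  have "Max ?S \<in> ?S" using n by (intro Max_in) auto
  then obtain i where i: "i < n" "norm (v$i) = Max ?S" by auto
  have mx: "norm (v$j) \<le> norm (v$i)" if "j < n" for j
    using i that by (simp add: Max_ge)
  have vi: "v$i \<noteq> 0"
  proof
    assume "v$i = 0"
    then have "v = 0\<^sub>v n" using v(1) mx by (intro eq_vecI) auto
    then show False using v(2) by simp
  qed
  have e1: "l * v$i = (M *\<^sub>v v) $ i" using v i by simp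
  have e2: "(M *\<^sub>v v) $ i = (\<Sum>j<n. M$$(i,j) * v$j)"
    using M v(1) i by (simp add: scalar_prod_def atLeast0LessThan)
  have eq: "l * v$i = (\<Sum>j<n. M$$(i,j) * v$j)" using e1 e2 by simp
  have "norm l * norm (v$i) = norm (\<Sum>j<n. M$$(i,j) * v$j)" using eq by (simp add: norm_mult[symmetric])
  also have "\<dots> \<le> (\<Sum>j<n. norm (M$$(i,j) * v$j))" by (rule norm_sum)
  also have "\<dots> = (\<Sum>j<n. norm (M$$(i,j)) * norm (v$j))" by (simp add: norm_mult)
  also have "\<dots> \<le> (\<Sum>j<n. norm (M$$(i,j)) * norm (v$i))"
    by (intro sum_mono mult_left_mono mx) auto
  also have "\<dots> = (\<Sum>j<n. norm (M$$(i,j))) * norm (v$i)" by (simp add: sum_distrib_right)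
  finally have "norm l \<le> (\<Sum>j<n. norm (M$$(i,j)))" using vi by simp
  also have "\<dots> \<le> (\<Sum>i<n. \<Sum>j<n. norm (M$$(i,j)))"
    using i by (intro member_le_sum sum_nonneg) auto
  finally show ?thesis .
qed

lemma det_rank1:
  fixes A B :: "'a :: comm_ring_1 mat"
  assumes A: "A \<in> carrier_mat n n" and B: "B \<in> carrier_mat n n" and d: "d < n"
    and Bz: "\<And>i j. i < n \<Longrightarrow> j < n \<Longrightarrow> i \<noteq> d \<Longrightarrow> B$$(i,j) = 0"
  shows "det (A + c \<cdot>\<^sub>m B) = det A + c * (\<Sum>j<n. B$$(d,j) * cofactor A d j)"
proof -
  have C: "A + c \<cdot>\<^sub>m B \<in> carrier_mat n n" using A B by auto
  have cof: "cofactor (A + c \<cdot>\<^sub>m B) d j = cofactor A d j" for j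
  proof -
    have "mat_delete (A + c \<cdot>\<^sub>m B) d j = mat_delete A d j"
      unfolding mat_delete_def using A B d by (intro eq_matI) (auto simp: Bz)
    then show ?thesis unfolding cofactor_def by simp
  qed
  have "det (A + c \<cdot>\<^sub>m B) = (\<Sum>j<n. (A + c \<cdot>\<^sub>m B)$$(d,j) * cofactor (A + c \<cdot>\<^sub>m B) d j)"
    by (rule laplace_expansion_row[OF C d])
  also have "\<dots> = (\<Sum>j<n. (A$$(d,j) + c * B$$(d,j)) * cofactor A d j)"
    using A B d by (intro sum.cong) (auto simp: cof)
  also have "\<dots> = (\<Sum>j<n. A$$(d,j) * cofactor A d j) + c * (\<Sum>j<n. B$$(d,j) * cofactor A d j)"
    by (simp add: algebra_simps sum.distrib sum_distrib_left)
  also have "(\<Sum>j<n. A$$(d,j) * cofactor A d j) = det A"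
    by (rule laplace_expansion_row[OF A d, symmetric])
  finally show ?thesis .
qed

lemma perturb:
  fixes A B :: "complex mat"
  assumes A: "A \<in> carrier_mat n n" and B: "B \<in> carrier_mat n n" and d: "d < n"
    and Bz: "\<And>i j. i < n \<Longrightarrow> j < n \<Longrightarrow> i \<noteq> d \<Longrightarrow> B$$(i,j) = 0"
    and hA: "\<And>l. eigenvalue A l \<Longrightarrow> Re l > 0"
  shows "\<exists>\<eta>>0. \<forall>\<delta>::real. \<bar>\<delta>\<bar> < \<eta> \<longrightarrow> (\<forall>l. eigenvalue (A + complex_of_real \<delta> \<cdot>\<^sub>m B) l \<longrightarrow> Re l > 0)"
proof -
  define R where "R = (\<Sum>i<n. \<Sum>j<n. norm (A$$(i,j))) + (\<Sum>i<n. \<Sum>j<n. norm (B$$(i,j)))"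
  have R0: "R \<ge> 0" unfolding R_def by (intro add_nonneg_nonneg sum_nonneg) auto
  define K where "K = (\<lambda>p. Complex (fst p) (snd p)) ` ({-R..0} \<times> {-R..R})"
  have Kc: "compact K" unfolding K_def
    by (intro compact_continuous_image compact_Times compact_Icc) (auto intro!: continuous_intros)
  have KRe: "K \<subseteq> {z. Re z \<le> 0}" unfolding K_def by auto
  have Kne: "K \<noteq> {}" unfolding K_def using R0 by auto
  define f where "f z = det (char_matrix A z)" for z
  define g where "g z = (\<Sum>j<n. B$$(d,j) * cofactor (char_matrix A z) d j)" for z
  have chA: "char_matrix A z \<in> carrier_mat n n" for z using A by simp
  have entr: "(char_matrix A z) $$ (i,j) = A$$(i,j) - (if i = j then z else 0)" if "i<n" "j<n" for z i j
    using A that by (auto simp: char_matrix_def)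
  have centr: "continuous_on UNIV (\<lambda>z. (char_matrix A z) $$ (i,j))" if "i<n" "j<n" for i j
  proof -
    have eq: "(\<lambda>z. char_matrix A z $$ (i,j)) = (\<lambda>z. A$$(i,j) - (if i=j then z else 0))"
      using entr[OF that] by auto
    have c: "continuous_on UNIV (\<lambda>z. A$$(i,j) - (if i=j then z else 0))"
      by (cases "i=j") (auto intro!: continuous_intros)
    show ?thesis by (subst eq) (rule c)
  qed
  have fc: "continuous_on UNIV f" unfolding f_def
    by (rule det_cont[of "\<lambda>z. char_matrix A z" n UNIV, OF chA centr])
  have dc: "continuous_on UNIV (\<lambda>z. det (mat_delete (char_matrix A z) d j))" for j
  proof (rule det_cont[of _ "n-1"])
    show "mat_delete (char_matrix A z) d j \<in> carrier_mat (n-1) (n-1)" for z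
      using mat_delete_carrier[OF chA] by simp
    fix i' j' assume ij: "i' < n-1" "j' < n-1"
    then have "(\<lambda>z. mat_delete (char_matrix A z) d j $$ (i',j')) = (\<lambda>z. char_matrix A z $$ (if i'<d then i' else Suc i', if j'<j then j' else Suc j'))"
      using chA[of 0] by (intro ext) (auto simp: mat_delete_def char_matrix_def)
    moreover have "continuous_on UNIV (\<lambda>z. char_matrix A z $$ (if i'<d then i' else Suc i', if j'<j then j' else Suc j'))"
      using ij by (intro centr) auto
    ultimately show "continuous_on UNIV (\<lambda>z. mat_delete (char_matrix A z) d j $$ (i',j'))" by metis
  qed
  have gc: "continuous_on UNIV g" unfolding g_def cofactor_def
    by (intro continuous_intros dc)
  have fnz: "f z \<noteq> 0" if "Re z \<le> 0" for z
  proof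
    assume "f z = 0"
    then have "eigenvalue A z" using eigenvalue_det[OF A] unfolding f_def by simp
    then show False using hA that by force
  qed
  have hc: "continuous_on K (\<lambda>z. norm (g z / f z))"
    using fnz KRe by (intro continuous_intros continuous_on_subset[OF gc] continuous_on_subset[OF fc]) auto
  obtain z0 where z0: "z0 \<in> K" "\<forall>y\<in>K. norm (g y / f y) \<le> norm (g z0 / f z0)"
    using continuous_attains_sup[OF Kc Kne hc] by blast
  define C where "C = norm (g z0 / f z0)"
  have C0: "C \<ge> 0" unfolding C_def by simp
  define \<eta> where "\<eta> = min 1 (1/(C+1))"
  have eta: "\<eta> > 0" unfolding \<eta>_def using C0 by simp
  show ?thesis
  proof (intro exI[of _ \<eta>] conjI allI impI eta)
    fix \<delta> :: real and l assume del: "\<bar>\<delta>\<bar> < \<eta>" and ev: "eigenvalue (A + complex_of_real \<delta> \<cdot>\<^sub>m B) l"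
    show "Re l > 0"
    proof (rule ccontr)
      assume nl: "\<not> Re l > 0"
      let ?M = "A + complex_of_real \<delta> \<cdot>\<^sub>m B"
      have M: "?M \<in> carrier_mat n n" using A B by simp
      have d1: "\<bar>\<delta>\<bar> \<le> 1" using del unfolding \<eta>_def by simp
      have "norm l \<le> (\<Sum>i<n. \<Sum>j<n. norm (?M$$(i,j)))" by (rule eig_bound[OF M ev])
      also have "\<dots> \<le> (\<Sum>i<n. \<Sum>j<n. norm (A$$(i,j)) + norm (B$$(i,j)))"
      proof (intro sum_mono)
        fix i j assume "i \<in> {..<n}" "j \<in> {..<n}"
        then have "?M$$(i,j) = A$$(i,j) + complex_of_real \<delta> * B$$(i,j)" using A B by simp
        also have "norm \<dots> \<le> norm (A$$(i,j)) + \<bar>\<delta>\<bar> * norm (B$$(i,j))"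
          by (metis norm_triangle_ineq norm_mult norm_of_real)
        also have "\<dots> \<le> norm (A$$(i,j)) + norm (B$$(i,j))"
          using d1 by (simp add: mult_left_le_one_le)
        finally show "norm (?M$$(i,j)) \<le> norm (A$$(i,j)) + norm (B$$(i,j))" .
      qed
      also have "\<dots> = R" unfolding R_def by (simp add: sum.distrib)
      finally have lR: "norm l \<le> R" .
      have "l \<in> K" unfolding K_def
      proof (rule image_eqI[of _ _ "(Re l, Im l)"])
        show "l = Complex (fst (Re l, Im l)) (snd (Re l, Im l))" by simp
        show "(Re l, Im l) \<in> {-R..0} \<times> {-R..R}"
          using lR nl abs_Re_le_cmod[of l] abs_Im_le_cmod[of l] by auto
      qed
      then have Cl: "norm (g l / f l) \<le> C" using z0 unfolding C_def by blast
      have fl: "f l \<noteq> 0" using fnz nl by simp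
      have "det (char_matrix ?M l) = 0" using eigenvalue_det[OF M] ev by simp
      moreover have "char_matrix ?M l = char_matrix A l + complex_of_real \<delta> \<cdot>\<^sub>m B"
        unfolding char_matrix_def using A B by (intro eq_matI) auto
      moreover have "det (char_matrix A l + complex_of_real \<delta> \<cdot>\<^sub>m B) = f l + complex_of_real \<delta> * g l"
        unfolding f_def g_def by (rule det_rank1[OF chA B d Bz])
      ultimately have "f l = - complex_of_real \<delta> * g l" by (simp add: eq_neg_iff_add_eq_0)
      then have "norm (f l) = \<bar>\<delta>\<bar> * norm (g l / f l) * norm (f l)"
        using fl by (simp add: norm_mult norm_divide)
      also have "\<dots> \<le> \<bar>\<delta>\<bar> * C * norm (f l)"
        using Cl by (intro mult_right_mono mult_left_mono) auto
      finally have "1 \<le> \<bar>\<delta>\<bar> * C" using fl by simp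
      moreover have "\<bar>\<delta>\<bar> * C < 1"
      proof -
        have "\<bar>\<delta>\<bar> < 1/(C+1)" using del unfolding \<eta>_def by simp
        then have "\<bar>\<delta>\<bar> * (C+1) < 1" using C0 by (simp add: field_simps)
        then show ?thesis using C0 by (smt (verit) mult_nonneg_nonneg abs_ge_zero distrib_left mult.commute)
      qed
      ultimately show False by simp
    qed
  qed
qed

lemma matinv_props:
  fixes A :: "real mat"
  assumes A: "A \<in> carrier_mat n n" and dA: "det A \<noteq> 0"
  shows "matinv A \<in> carrier_mat n n \<and> A * matinv A = 1\<^sub>m n \<and> matinv A * A = 1\<^sub>m n"
proof (cases "mat_inverse A")
  case None
  then have "A \<notin> Units (ring_mat TYPE(real) n ())" by (rule mat_inverse(1)[OF A])
  moreover have "A \<in> Units (ring_mat TYPE(real) n ())" by (rule det_non_zero_imp_unit[OF A dA])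
  ultimately show ?thesis by simp
next
  case (Some B)
  then show ?thesis using mat_inverse(2)[OF A Some] unfolding matinv_def by simp
qed

lemma invertible_det:
  fixes A :: "real mat"
  assumes A: "A \<in> carrier_mat n n" and inv: "invertible_mat A"
  shows "det A \<noteq> 0"
proof -
  obtain B where AB: "A * B = 1\<^sub>m n" and BA: "B * A = 1\<^sub>m (dim_row B)"
    using inv A unfolding invertible_mat_def inverts_mat_def by auto
  have "dim_col B = n" using AB A by (metis index_mult_mat(3) index_one_mat(3))
  moreover have "dim_row B = n" using BA A by (metis index_mult_mat(3) index_one_mat(3) carrier_matD(2))
  ultimately have B: "B \<in> carrier_mat n n" by auto
  have "det A * det B = 1" using det_mult[OF A B] AB by simp
  then show ?thesis by auto
qed

lemma mv_sum:
  fixes A :: "'a :: comm_ring_1 mat"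
  assumes "A \<in> carrier_mat n m" "v \<in> carrier_vec m" "i < n"
  shows "(A *\<^sub>v v) $ i = (\<Sum>j<m. A $$ (i,j) * v $ j)"
  using assms by (simp add: scalar_prod_def atLeast0LessThan)

lemma sp_sum:
  fixes u :: "'a :: comm_ring_1 vec"
  assumes "u \<in> carrier_vec n" "v \<in> carrier_vec n"
  shows "u \<bullet> v = (\<Sum>j<n. u $ j * v $ j)"
  using assms by (simp add: scalar_prod_def atLeast0LessThan)

lemma mv_uminus:
  fixes A :: "'a :: comm_ring_1 mat"
  assumes "A \<in> carrier_mat n m" "u \<in> carrier_vec m"
  shows "A *\<^sub>v (- u) = - (A *\<^sub>v u)"
  using assms by (intro eq_vecI) auto

lemma cost_expand:
  fixes Q :: "real mat"
  assumes Q: "Q \<in> carrier_mat n n" and sym: "Q = transpose_mat Q"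
    and x: "x \<in> carrier_vec n" and f: "f \<in> carrier_vec n" and bb: "bb \<in> carrier_vec n"
  shows "1/2 * ((x + t \<cdot>\<^sub>v f) \<bullet> (Q *\<^sub>v (x + t \<cdot>\<^sub>v f))) + bb \<bullet> (x + t \<cdot>\<^sub>v f) + p
       = (1/2 * (x \<bullet> (Q *\<^sub>v x)) + bb \<bullet> x + p) + t * ((Q *\<^sub>v x + bb) \<bullet> f) + t^2 * (1/2 * (f \<bullet> (Q *\<^sub>v f)))"
proof -
  have s1: "x \<bullet> (Q *\<^sub>v f) = (Q *\<^sub>v x) \<bullet> f"
    using transpose_vec_mult_scalar[OF Q f x] sym by simp
  have s2: "f \<bullet> (Q *\<^sub>v x) = (Q *\<^sub>v x) \<bullet> f"
    by (rule comm_scalar_prod[OF f mult_mat_vec_carrier[OF Q x]])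
  have e1: "Q *\<^sub>v (x + t \<cdot>\<^sub>v f) = Q *\<^sub>v x + t \<cdot>\<^sub>v (Q *\<^sub>v f)"
    using Q x f by (simp add: mult_add_distrib_mat_vec mult_mat_vec)
  have e2: "(x + t \<cdot>\<^sub>v f) \<bullet> (Q *\<^sub>v x + t \<cdot>\<^sub>v (Q *\<^sub>v f))
     = x \<bullet> (Q *\<^sub>v x) + t * (x \<bullet> (Q *\<^sub>v f)) + t * (f \<bullet> (Q *\<^sub>v x)) + t * t * (f \<bullet> (Q *\<^sub>v f))"
    using Q x f by (simp add: add_scalar_prod_distrib[of _ n] scalar_prod_add_distrib[of _ n] algebra_simps)
  have e3: "bb \<bullet> (x + t \<cdot>\<^sub>v f) = bb \<bullet> x + t * (bb \<bullet> f)"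
    using bb x f by (simp add: scalar_prod_add_distrib[of _ n])
  have e4: "(Q *\<^sub>v x + bb) \<bullet> f = (Q *\<^sub>v x) \<bullet> f + bb \<bullet> f"
    using Q bb x f by (simp add: add_scalar_prod_distrib[of _ n])
  have e5: "bb \<bullet> f = f \<bullet> bb" using comm_scalar_prod[OF bb f] .
  show ?thesis unfolding e1 e2 e3 e4 s1 s2 by (simp add: algebra_simps power2_eq_square)
qed

lemma eig_smult:
  fixes M :: "complex mat"
  assumes M: "M \<in> carrier_mat n n" and c: "c \<noteq> 0"
  shows "eigenvalue (c \<cdot>\<^sub>m M) mu \<longleftrightarrow> eigenvalue M (mu / c)"
proof -
  have key: "(c \<cdot>\<^sub>m M) *\<^sub>v v = mu \<cdot>\<^sub>v v \<longleftrightarrow> M *\<^sub>v v = (mu / c) \<cdot>\<^sub>v v" if v: "v \<in> carrier_vec n" for v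
  proof -
    have "(c \<cdot>\<^sub>m M) *\<^sub>v v = mu \<cdot>\<^sub>v v \<longleftrightarrow> (\<forall>i<n. c * (M *\<^sub>v v) $ i = mu * v $ i)"
      using M v by (auto simp: vec_eq_iff)
    also have "\<dots> \<longleftrightarrow> (\<forall>i<n. (M *\<^sub>v v) $ i = (mu / c) * v $ i)"
      using c by (auto simp: field_simps)
    also have "\<dots> \<longleftrightarrow> M *\<^sub>v v = (mu / c) \<cdot>\<^sub>v v"
      using M v by (auto simp: vec_eq_iff)
    finally show ?thesis .
  qed
  show ?thesis unfolding eigenvalue_def eigenvector_def using M key by auto
qed

lemma hurwitz_iff:
  fixes C :: "real mat"
  assumes C: "C \<in> carrier_mat n n" and k: "k > 0"
  shows "hurwitz ((- k) \<cdot>\<^sub>m C) \<longleftrightarrow> (\<forall>l. eigenvalue (map_mat complex_of_real C) l \<longrightarrow> Re l > 0)"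
proof -
  have mC: "map_mat complex_of_real C \<in> carrier_mat n n" using C by simp
  have eq: "map_mat complex_of_real ((- k) \<cdot>\<^sub>m C) = complex_of_real (- k) \<cdot>\<^sub>m map_mat complex_of_real C"
    using C by (intro eq_matI) auto
  have ck: "complex_of_real (- k) \<noteq> 0" using k by simp
  have "hurwitz ((- k) \<cdot>\<^sub>m C) \<longleftrightarrow> (\<forall>mu. eigenvalue (map_mat complex_of_real C) (mu / complex_of_real (-k)) \<longrightarrow> Re mu < 0)"
    unfolding hurwitz_def eq eig_smult[OF mC ck] using C by simp
  also have "\<dots> \<longleftrightarrow> (\<forall>l. eigenvalue (map_mat complex_of_real C) l \<longrightarrow> Re l > 0)"
  proof
    assume h: "\<forall>mu. eigenvalue (map_mat complex_of_real C) (mu / complex_of_real (-k)) \<longrightarrow> Re mu < 0"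
    show "\<forall>l. eigenvalue (map_mat complex_of_real C) l \<longrightarrow> Re l > 0"
    proof (intro allI impI)
      fix l assume "eigenvalue (map_mat complex_of_real C) l"
      moreover have "(l * complex_of_real (-k)) / complex_of_real (-k) = l" using ck by simp
      ultimately have "Re (l * complex_of_real (-k)) < 0" using h by metis
      then have "0 < Re l * k" using k by simp
      then show "Re l > 0" using k by (metis zero_less_mult_pos2)
    qed
  next
    assume h: "\<forall>l. eigenvalue (map_mat complex_of_real C) l \<longrightarrow> Re l > 0"
    show "\<forall>mu. eigenvalue (map_mat complex_of_real C) (mu / complex_of_real (-k)) \<longrightarrow> Re mu < 0"
    proof (intro allI impI)
      fix mu assume "eigenvalue (map_mat complex_of_real C) (mu / complex_of_real (-k))"
      then have "Re (mu / complex_of_real (-k)) > 0" using h by blast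
      then show "Re mu < 0" using k by (simp add: Re_divide_of_real divide_less_0_iff)
    qed
  qed
  finally show ?thesis .
qed

lemma det_from_eig:
  fixes C :: "real mat"
  assumes C: "C \<in> carrier_mat n n" and h: "\<forall>l. eigenvalue (map_mat complex_of_real C) l \<longrightarrow> Re l > 0"
  shows "det C \<noteq> 0"
proof
  assume "det C = 0"
  then have "det (map_mat complex_of_real C) = 0" by simp
  moreover have "char_matrix (map_mat complex_of_real C) 0 = map_mat complex_of_real C"
    using C unfolding char_matrix_def by (intro eq_matI) auto
  ultimately have "eigenvalue (map_mat complex_of_real C) 0"
    using eigenvalue_det[of "map_mat complex_of_real C" n 0] C by simp
  then show False using h by fastforce
qed

locale setting =
  fixes N d :: nat and Q :: "nat \<Rightarrow> real mat" and b :: "nat \<Rightarrow> real vec"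
  assumes Qcar: "\<And>i. i < N \<Longrightarrow> Q i \<in> carrier_mat N N"
    and bcar: "\<And>i. i < N \<Longrightarrow> b i \<in> carrier_vec N"
    and dN: "d < N"
    and detQ: "det (calQ N Q) \<noteq> 0"
    and detM: "det (mat_delete (calQ N Q) d 0) \<noteq> 0"
begin

lemma N0: "0 < N" using dN by simp

lemma cQ: "calQ N Q \<in> carrier_mat N N" by (simp add: calQ_def)
lemma cQi: "i < N \<Longrightarrow> j < N \<Longrightarrow> calQ N Q $$ (i,j) = Q i $$ (i,j)" by (simp add: calQ_def)
lemma cB: "calB N b \<in> carrier_vec N" by (simp add: calB_def)
lemma cBi: "i < N \<Longrightarrow> calB N b $ i = b i $ i" by (simp add: calB_def)
lemma bQ: "barQ N Q d \<in> carrier_mat N N" by (simp add: barQ_def)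
lemma bQi: "i < N \<Longrightarrow> j < N \<Longrightarrow> barQ N Q d $$ (i,j) = (if i = d then Q d $$ (0,j) else 0)"
  by (simp add: barQ_def)
lemma bB: "barB N b d \<in> carrier_vec N" by (simp add: barB_def)
lemma bBi: "i < N \<Longrightarrow> barB N b d $ i = (if i = d then b d $ 0 else 0)" by (simp add: barB_def)

lemma xs_car: "xstar N Q b \<in> carrier_vec N"
  using matinv_props[OF cQ detQ] cB unfolding xstar_def by auto

lemma xs_eq: "calQ N Q *\<^sub>v xstar N Q b = - calB N b"
proof -
  have I: "matinv (calQ N Q) \<in> carrier_mat N N" "calQ N Q * matinv (calQ N Q) = 1\<^sub>m N"
    using matinv_props[OF cQ detQ] by auto
  have "calQ N Q *\<^sub>v (matinv (calQ N Q) *\<^sub>v calB N b) = calB N b"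
    using assoc_mult_mat_vec[OF cQ I(1) cB, symmetric] I(2) cB by simp
  then show ?thesis unfolding xstar_def using mv_uminus[OF cQ] I(1) cB by simp
qed


definition "Md = mat_delete (calQ N Q) d 0"
definition "cc = col (mat_delete_row (calQ N Q) d) 0"
definition "ww = - (matinv Md *\<^sub>v cc)"

lemma Md: "Md \<in> carrier_mat (N-1) (N-1)"
  unfolding Md_def using mat_delete_carrier[OF cQ] by simp

lemma Mdi: "r < N-1 \<Longrightarrow> s < N-1 \<Longrightarrow> Md $$ (r,s) = calQ N Q $$ (if r < d then r else Suc r, Suc s)"
  unfolding Md_def mat_delete_def using cQ by auto

lemma cc: "cc \<in> carrier_vec (N-1)"
  unfolding cc_def mat_delete_row_def using cQ by (auto simp: col_def)

lemma cci: "r < N-1 \<Longrightarrow> cc $ r = calQ N Q $$ (if r < d then r else Suc r, 0)"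
  unfolding cc_def mat_delete_row_def using cQ N0 by (auto simp: col_def)


lemma ww: "ww \<in> carrier_vec (N-1)"
  using matinv_props[OF Md detM[folded Md_def]] cc unfolding ww_def by auto

lemma Mw: "Md *\<^sub>v ww = - cc"
proof -
  have I: "matinv Md \<in> carrier_mat (N-1) (N-1)" "Md * matinv Md = 1\<^sub>m (N-1)"
    using matinv_props[OF Md detM[folded Md_def]] by auto
  have "Md *\<^sub>v (matinv Md *\<^sub>v cc) = cc"
    using assoc_mult_mat_vec[OF Md I(1) cc, symmetric] I(2) cc by simp
  then show ?thesis unfolding ww_def using mv_uminus[OF Md] I(1) cc by simp
qed

lemma Phi_eq: "Phi N Q d = vec_of_list [1] @\<^sub>v ww"
  unfolding Phi_def ww_def Md_def cc_def by simp



lemma ww_dim: "dim_vec ww = N - 1" using ww by auto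

lemma Phi_car: "Phi N Q d \<in> carrier_vec N"
  unfolding Phi_eq carrier_vec_def using ww_dim N0 by simp

lemma Phi0: "Phi N Q d $ 0 = 1"
  unfolding Phi_eq using ww_dim N0 by (simp add: vec_of_list_index)

lemma PhiS: "s < N-1 \<Longrightarrow> Phi N Q d $ Suc s = ww $ s"
  unfolding Phi_eq using ww_dim N0 by simp

lemma Phi_ker:
  assumes m: "m < N" "m \<noteq> d"
  shows "(calQ N Q *\<^sub>v Phi N Q d) $ m = 0"
proof -
  obtain n' where n': "N = Suc n'" using N0 by (cases N) auto
  define r where "r = (if m < d then m else m - 1)"
  have r: "r < N-1" "(if r < d then r else Suc r) = m" using m dN unfolding r_def by auto
  have "(calQ N Q *\<^sub>v Phi N Q d) $ m = (\<Sum>j<N. calQ N Q $$ (m,j) * Phi N Q d $ j)"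
    by (rule mv_sum[OF cQ Phi_car m(1)])
  also have "\<dots> = calQ N Q $$ (m,0) * Phi N Q d $ 0 + (\<Sum>s<n'. calQ N Q $$ (m,Suc s) * Phi N Q d $ Suc s)"
    unfolding n' by (rule sum.lessThan_Suc_shift)
  also have "\<dots> = calQ N Q $$ (m,0) + (\<Sum>s<N-1. Md $$ (r,s) * ww $ s)"
    using Phi0 PhiS Mdi r n' by simp
  also have "(\<Sum>s<N-1. Md $$ (r,s) * ww $ s) = (Md *\<^sub>v ww) $ r"
    by (rule mv_sum[OF Md ww r(1), symmetric])
  also have "\<dots> = - calQ N Q $$ (m,0)"
    using Mw cci[OF r(1)] r cc by simp
  finally show ?thesis by simp
qed

lemma Phi_d: "(calQ N Q *\<^sub>v Phi N Q d) $ d = q3 N Q d"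
proof -
  have "(calQ N Q *\<^sub>v Phi N Q d) $ d = (\<Sum>j<N. calQ N Q $$ (d,j) * Phi N Q d $ j)"
    by (rule mv_sum[OF cQ Phi_car dN])
  also have "\<dots> = (\<Sum>j<N. row (Q d) d $ j * Phi N Q d $ j)"
    using cQi dN Qcar[OF dN] by (intro sum.cong) auto
  also have "\<dots> = q3 N Q d"
  proof -
    have "row (Q d) d \<in> carrier_vec N" using Qcar[OF dN] by (simp add: row_def)
    then show ?thesis unfolding q3_def by (rule sp_sum[OF _ Phi_car, symmetric])
  qed
  finally show ?thesis .
qed


lemma cQd: "calQd N Q d \<delta> \<in> carrier_mat N N" unfolding calQd_def using cQ bQ by simp
lemma cBd: "calBd N b d \<delta> \<in> carrier_vec N" unfolding calBd_def using cB bB by simp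
lemma cQdi: "m < N \<Longrightarrow> j < N \<Longrightarrow> calQd N Q d \<delta> $$ (m,j) = calQ N Q $$ (m,j) + \<delta> * barQ N Q d $$ (m,j)"
  unfolding calQd_def by (simp add: calQ_def barQ_def)
lemma cBdi: "m < N \<Longrightarrow> calBd N b d \<delta> $ m = calB N b $ m + \<delta> * barB N b d $ m"
  unfolding calBd_def by (simp add: calB_def barB_def)

lemma rowQd0: "row (Q d) 0 \<in> carrier_vec N" using Qcar[OF dN] by (simp add: row_def)

lemma xdelta_eq:
  assumes dQ: "det (calQd N Q d \<delta>) \<noteq> 0" and nz: "q3 N Q d + \<delta> * q2 N Q d \<noteq> 0"
  shows "xdelta N Q b d \<delta> = xstar N Q b + (\<delta> * q1 N Q b d / (q3 N Q d + \<delta> * q2 N Q d)) \<cdot>\<^sub>v Phi N Q d"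
proof -
  define t where "t = \<delta> * q1 N Q b d / (q3 N Q d + \<delta> * q2 N Q d)"
  define v where "v = xstar N Q b + t \<cdot>\<^sub>v Phi N Q d"
  have v: "v \<in> carrier_vec N" unfolding v_def using xs_car Phi_car by simp
  have vm: "v $ j = xstar N Q b $ j + t * Phi N Q d $ j" if "j < N" for j
    using that xs_car Phi_car unfolding v_def by simp
  have rv: "row (Q d) 0 \<bullet> v = row (Q d) 0 \<bullet> xstar N Q b + t * q2 N Q d"
    unfolding v_def q2_def using rowQd0 xs_car Phi_car by (simp add: scalar_prod_add_distrib[of _ N])
  have key: "calQd N Q d \<delta> *\<^sub>v v = - calBd N b d \<delta>"
  proof (rule eq_vecI)
    show "dim_vec (calQd N Q d \<delta> *\<^sub>v v) = dim_vec (- calBd N b d \<delta>)" using cQd[of \<delta>] cBd[of \<delta>] by simp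
    fix m assume "m < dim_vec (- calBd N b d \<delta>)"
    then have m: "m < N" using cBd[of \<delta>] by simp
    have "(calQd N Q d \<delta> *\<^sub>v v) $ m = (\<Sum>j<N. calQd N Q d \<delta> $$ (m,j) * v$j)"
      by (rule mv_sum[OF cQd v m])
    also have "\<dots> = (\<Sum>j<N. calQ N Q $$ (m,j) * xstar N Q b $ j) + t * (\<Sum>j<N. calQ N Q $$ (m,j) * Phi N Q d $ j)
         + \<delta> * (\<Sum>j<N. barQ N Q d $$ (m,j) * v $ j)"
      using m by (simp add: cQdi vm algebra_simps sum.distrib sum_distrib_left)
    also have "(\<Sum>j<N. calQ N Q $$ (m,j) * xstar N Q b $ j) = - calB N b $ m"
      using mv_sum[OF cQ xs_car m] xs_eq m cB by simp
    also have "(\<Sum>j<N. calQ N Q $$ (m,j) * Phi N Q d $ j) = (calQ N Q *\<^sub>v Phi N Q d) $ m"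
      using mv_sum[OF cQ Phi_car m] by simp
    also have "(\<Sum>j<N. barQ N Q d $$ (m,j) * v $ j) = (if m = d then row (Q d) 0 \<bullet> v else 0)"
    proof (cases "m = d")
      case True
      have "(\<Sum>j<N. barQ N Q d $$ (m,j) * v $ j) = (\<Sum>j<N. row (Q d) 0 $ j * v $ j)"
        using True m Qcar[OF dN] by (intro sum.cong) (auto simp: bQi)
      also have "\<dots> = row (Q d) 0 \<bullet> v" by (rule sp_sum[OF rowQd0 v, symmetric])
      finally show ?thesis using True by simp
    next
      case False
      then show ?thesis using m by (simp add: bQi)
    qed
    finally have eqm: "(calQd N Q d \<delta> *\<^sub>v v) $ m = - calB N b $ m + t * (calQ N Q *\<^sub>v Phi N Q d) $ m
        + \<delta> * (if m = d then row (Q d) 0 \<bullet> v else 0)" .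
    show "(calQd N Q d \<delta> *\<^sub>v v) $ m = (- calBd N b d \<delta>) $ m"
    proof (cases "m = d")
      case True
      have tq: "t * (q3 N Q d + \<delta> * q2 N Q d) = \<delta> * q1 N Q b d" unfolding t_def using nz by simp
      have "(calQd N Q d \<delta> *\<^sub>v v) $ m = - calB N b $ d + t * q3 N Q d + \<delta> * (row (Q d) 0 \<bullet> xstar N Q b + t * q2 N Q d)"
        using eqm True Phi_d rv by simp
      also have "\<dots> = - calB N b $ d - \<delta> * b d $ 0"
        using tq unfolding q1_def by (simp add: algebra_simps)
      also have "\<dots> = (- calBd N b d \<delta>) $ m" using True m cBd[of \<delta>] by (simp add: cBdi bBi)
      finally show ?thesis .
    next
      case False
      then show ?thesis using eqm m Phi_ker[OF m False] cBd[of \<delta>] by (simp add: cBdi bBi)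
    qed
  qed
  obtain I where I: "matinv (calQd N Q d \<delta>) = I" "I \<in> carrier_mat N N" "I * calQd N Q d \<delta> = 1\<^sub>m N"
    using matinv_props[OF cQd dQ] by auto
  have "xdelta N Q b d \<delta> = - (I *\<^sub>v calBd N b d \<delta>)" unfolding xdelta_def I(1) ..
  also have "\<dots> = I *\<^sub>v (- calBd N b d \<delta>)" using mv_uminus[OF I(2) cBd] by simp
  also have "\<dots> = I *\<^sub>v (calQd N Q d \<delta> *\<^sub>v v)" using key by simp
  also have "\<dots> = v" using assoc_mult_mat_vec[OF I(2) cQd v, symmetric] I(3) v by simp
  finally show ?thesis unfolding v_def t_def .
qed

end

lemma neg_of_pos_factor:
  fixes x y :: real
  assumes "x * y < 0" "y > 0" shows "x < 0"
  using assms by (metis mult_pos_pos not_less_iff_gr_or_eq mult_zero_left order_less_asym)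

lemma choose_delta:
  fixes q1 q2 q3 r01 r02 \<epsilon> \<eta>0 :: real and r1 r2 :: "nat \<Rightarrow> real" and I :: "nat set"
  assumes I: "finite I" "0 \<in> I"
    and Isgn: "\<forall>i\<in>I. r1 i \<noteq> 0 \<and> sgn (r1 i) = sgn (r1 0)"
    and sign: "\<epsilon> * r1 0 * q1 * q3 < 0" and eta0: "\<eta>0 > 0"
  shows "\<exists>\<delta>s \<eta>1. 0 < \<eta>1 \<and> \<eta>1 \<le> \<eta>0 \<and> \<bar>\<delta>s\<bar> < \<eta>1 \<and> (\<forall>\<delta>. \<bar>\<delta>\<bar> < \<eta>1 \<longrightarrow> q3 + \<delta> * q2 \<noteq> 0) \<and>
     (\<forall>i\<in>I. r1 i * (\<delta>s * q1 / (q3 + \<delta>s * q2)) + r2 i * (\<delta>s * q1 / (q3 + \<delta>s * q2))^2 < 0) \<and>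
     \<epsilon> * ((r1 0 + 2 * r2 0 * (\<delta>s * q1 / (q3 + \<delta>s * q2))) * (q1 * q3 / (q3 + \<delta>s * q2)^2)) < 0"
proof -
  have ne: "\<epsilon> \<noteq> 0" "r1 0 \<noteq> 0" "q1 \<noteq> 0" "q3 \<noteq> 0" using sign by auto
  define m where "m = Min ((\<lambda>i. \<bar>r1 i\<bar> / (\<bar>r2 i\<bar> + 1)) ` I)"
  have mpos: "m > 0" unfolding m_def using I Isgn by (subst Min_gr_iff) (auto intro!: divide_pos_pos)
  have mle: "m \<le> \<bar>r1 i\<bar> / (\<bar>r2 i\<bar> + 1)" if "i \<in> I" for i
    unfolding m_def using I that by (intro Min_le) auto
  define m0 where "m0 = min m (\<bar>r1 0\<bar> / (2 * \<bar>r2 0\<bar> + 1))"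
  have m0pos: "m0 > 0" unfolding m0_def using mpos ne by simp
  define \<eta>1 where "\<eta>1 = min \<eta>0 (\<bar>q3\<bar> / (\<bar>q2\<bar> + 1))"
  define h where "h = min (\<eta>0 / 2) (min (\<bar>q3\<bar> / (2 * (\<bar>q2\<bar> + 1))) (m0 * \<bar>q3\<bar> / (4 * \<bar>q1\<bar>)))"
  have hpos: "h > 0" unfolding h_def using eta0 ne m0pos by simp
  have h1: "h \<le> \<bar>q3\<bar> / (2 * (\<bar>q2\<bar> + 1))" "h \<le> m0 * \<bar>q3\<bar> / (4 * \<bar>q1\<bar>)" "h \<le> \<eta>0 / 2"
    unfolding h_def by (meson min.cobounded1 min.cobounded2 order_trans)+
  have eta1: "0 < \<eta>1" "\<eta>1 \<le> \<eta>0" unfolding \<eta>1_def using eta0 ne by auto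
  have q3pos: "\<bar>q3\<bar> > 0" using ne by simp
  have "h < \<bar>q3\<bar> / (\<bar>q2\<bar> + 1)"
  proof -
    have "\<bar>q3\<bar> / (2 * (\<bar>q2\<bar> + 1)) < \<bar>q3\<bar> / (\<bar>q2\<bar> + 1)"
      using q3pos by (intro divide_strict_left_mono) (auto intro: add_pos_nonneg)
    then show ?thesis using h1(1) by linarith
  qed
  then have hl: "h < \<eta>1" unfolding \<eta>1_def using h1(3) eta0 by simp
  have nz: "q3 + \<delta> * q2 \<noteq> 0" if "\<bar>\<delta>\<bar> < \<eta>1" for \<delta>
  proof -
    have "\<bar>\<delta>\<bar> * (\<bar>q2\<bar> + 1) < \<bar>q3\<bar>"
      using that unfolding \<eta>1_def by (simp add: pos_less_divide_eq add_pos_nonneg)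
    then have "\<bar>\<delta> * q2\<bar> < \<bar>q3\<bar>" by (simp add: abs_mult algebra_simps)
    then show ?thesis by linarith
  qed
  define \<delta>s where "\<delta>s = sgn \<epsilon> * h"
  have dabs: "\<bar>\<delta>s\<bar> = h" unfolding \<delta>s_def using ne hpos by (simp add: abs_mult abs_sgn_eq)
  define den where "den = q3 + \<delta>s * q2"
  have dq2: "\<bar>\<delta>s * q2\<bar> \<le> \<bar>q3\<bar> / 2"
  proof -
    have "h * (2 * (\<bar>q2\<bar> + 1)) \<le> \<bar>q3\<bar>" using h1(1) by (simp add: le_divide_eq add_pos_nonneg)
    then have "h * \<bar>q2\<bar> \<le> \<bar>q3\<bar> / 2" using hpos by (simp add: algebra_simps)
    then show ?thesis using dabs by (simp add: abs_mult)
  qed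
  have denq3: "den * q3 > 0"
  proof -
    have "den * q3 = q3 * q3 + (\<delta>s * q2) * q3" unfolding den_def by (simp add: algebra_simps)
    moreover have "\<bar>(\<delta>s * q2) * q3\<bar> \<le> \<bar>q3\<bar> / 2 * \<bar>q3\<bar>" unfolding abs_mult[of "\<delta>s * q2" q3] by (rule mult_right_mono[OF dq2 abs_ge_zero])
    moreover have "q3 * q3 = \<bar>q3\<bar> * \<bar>q3\<bar>" by (simp add: abs_mult[symmetric])
    moreover have "\<bar>q3\<bar> * \<bar>q3\<bar> > 0" by (rule mult_pos_pos[OF q3pos q3pos])
    ultimately show ?thesis by linarith
  qed
  have den0: "den \<noteq> 0" using denq3 by auto
  have denabs: "\<bar>den\<bar> \<ge> \<bar>q3\<bar> / 2" unfolding den_def using dq2 by linarith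
  define t where "t = \<delta>s * q1 / den"
  have tabs: "\<bar>t\<bar> \<le> m0 / 2"
  proof -
    have "\<bar>t\<bar> = h * \<bar>q1\<bar> / \<bar>den\<bar>" unfolding t_def using dabs by (simp add: abs_mult abs_divide)
    also have "\<dots> \<le> h * \<bar>q1\<bar> / (\<bar>q3\<bar> / 2)"
      using denabs q3pos hpos by (intro divide_left_mono) auto
    also have "\<dots> = 2 * h * \<bar>q1\<bar> / \<bar>q3\<bar>" by simp
    also have "\<dots> \<le> 2 * (m0 * \<bar>q3\<bar> / (4 * \<bar>q1\<bar>)) * \<bar>q1\<bar> / \<bar>q3\<bar>"
      using h1(2) q3pos ne by (intro divide_right_mono mult_right_mono) auto
    also have "\<dots> = m0 / 2" using ne by (simp add: field_simps)
    finally show ?thesis .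
  qed
  have tm: "\<bar>t\<bar> < m0" using tabs m0pos by simp
  have sq: "\<delta>s * (r1 0 * q1 * q3) < 0"
  proof (cases "\<epsilon> > 0")
    case True
    then have "r1 0 * q1 * q3 < 0" using sign by (simp add: mult.assoc mult_less_0_iff)
    then show ?thesis unfolding \<delta>s_def using True hpos by (simp add: mult_pos_neg)
  next
    case False
    then have e: "\<epsilon> < 0" using ne by simp
    then have "r1 0 * q1 * q3 > 0" using sign by (simp add: mult.assoc mult_less_0_iff)
    then show ?thesis unfolding \<delta>s_def using e hpos by (simp add: mult_neg_pos)
  qed
  have tr0: "t * r1 0 < 0"
  proof -
    have td: "t * den = \<delta>s * q1" unfolding t_def using den0 by simp
    have "(t * r1 0) * (den * q3) = (t * den) * (r1 0 * q3)" by (simp add: algebra_simps)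
    also have "\<dots> = \<delta>s * (r1 0 * q1 * q3)" unfolding td by (simp add: algebra_simps)
    finally have "(t * r1 0) * (den * q3) < 0" using sq by linarith
    then show ?thesis using denq3 neg_of_pos_factor by blast
  qed
  have t0: "t \<noteq> 0" using tr0 by auto
  have costs: "r1 i * t + r2 i * t^2 < 0" if i: "i \<in> I" for i
  proof -
    have s0: "sgn (t * r1 0) = -1" using tr0 by simp
    have "sgn (t * r1 i) = -1" using s0 Isgn i by (simp add: sgn_mult)
    then have tri: "t * r1 i < 0" by (cases "t * r1 i" "0::real" rule: linorder_cases) auto
    have "\<bar>t\<bar> * (\<bar>r2 i\<bar> + 1) < \<bar>r1 i\<bar>"
    proof -
      have "\<bar>t\<bar> < \<bar>r1 i\<bar> / (\<bar>r2 i\<bar> + 1)" using tm mle[OF i] unfolding m0_def by linarith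
      then show ?thesis by (simp add: less_divide_eq add_pos_nonneg)
    qed
    then have a: "\<bar>r2 i\<bar> * \<bar>t\<bar> < \<bar>r1 i\<bar>" by (simp add: algebra_simps)
    have "r2 i * t^2 \<le> \<bar>r2 i\<bar> * \<bar>t\<bar> * \<bar>t\<bar>" by (simp add: power2_eq_square abs_mult[symmetric])
    also have "\<dots> < \<bar>r1 i\<bar> * \<bar>t\<bar>" using a t0 by (simp add: mult_strict_right_mono)
    also have "\<bar>r1 i\<bar> * \<bar>t\<bar> = - (r1 i * t)" using tri by (simp add: abs_mult[symmetric] mult.commute)
    finally show ?thesis by simp
  qed
  have deriv: "\<epsilon> * ((r1 0 + 2 * r2 0 * t) * (q1 * q3 / den^2)) < 0"
  proof -
    have "(2 * \<bar>r2 0\<bar> + 1) * \<bar>t\<bar> < \<bar>r1 0\<bar>"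
    proof -
      have "\<bar>t\<bar> < \<bar>r1 0\<bar> / (2 * \<bar>r2 0\<bar> + 1)" using tm unfolding m0_def by linarith
      then show ?thesis by (simp add: less_divide_eq add_pos_nonneg mult.commute)
    qed
    then have "\<bar>2 * r2 0 * t\<bar> < \<bar>r1 0\<bar>" by (simp add: abs_mult algebra_simps)
    then have P: "(r1 0 + 2 * r2 0 * t) * r1 0 > 0"
    proof -
      assume a: "\<bar>2 * r2 0 * t\<bar> < \<bar>r1 0\<bar>"
      have "(r1 0 + 2 * r2 0 * t) * r1 0 = r1 0 * r1 0 + (2 * r2 0 * t) * r1 0" by (simp add: algebra_simps)
      moreover have "\<bar>(2 * r2 0 * t) * r1 0\<bar> < \<bar>r1 0\<bar> * \<bar>r1 0\<bar>"
        unfolding abs_mult[of "2 * r2 0 * t" "r1 0"] using a ne by (intro mult_strict_right_mono) auto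
      moreover have "r1 0 * r1 0 = \<bar>r1 0\<bar> * \<bar>r1 0\<bar>" by (simp add: abs_mult[symmetric])
      ultimately show ?thesis by linarith
    qed
    have "(\<epsilon> * r1 0 * q1 * q3) * ((r1 0 + 2 * r2 0 * t) * r1 0) < 0"
      using sign P by (simp add: mult_neg_pos)
    then have "(\<epsilon> * (r1 0 + 2 * r2 0 * t) * q1 * q3) * (r1 0 * r1 0) < 0" by (simp add: algebra_simps)
    then have A: "\<epsilon> * (r1 0 + 2 * r2 0 * t) * q1 * q3 < 0"
      using ne neg_of_pos_factor by (metis not_real_square_gt_zero)
    have "den^2 > 0" using den0 by simp
    then have "\<epsilon> * (r1 0 + 2 * r2 0 * t) * q1 * q3 / den^2 < 0" using A by (simp add: divide_neg_pos)
    moreover have "\<epsilon> * ((r1 0 + 2 * r2 0 * t) * (q1 * q3 / den^2)) = \<epsilon> * (r1 0 + 2 * r2 0 * t) * q1 * q3 / den^2"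
      by simp
    ultimately show ?thesis by simp
  qed
  show ?thesis
    apply (rule exI[of _ \<delta>s], rule exI[of _ \<eta>1])
    using eta1 dabs hl nz costs deriv unfolding t_def den_def by auto
qed

lemma tt_deriv:
  fixes q1 q2 q3 x :: real
  assumes den: "q3 + x * q2 \<noteq> 0"
  shows "((\<lambda>\<delta>. \<delta> * q1 / (q3 + \<delta> * q2)) has_real_derivative (q1 * q3 / (q3 + x * q2)^2)) (at x)"
proof -
  have "((\<lambda>\<delta>. \<delta> * q1 / (q3 + \<delta> * q2)) has_real_derivative
      ((1 * q1) * (q3 + x * q2) - (x * q1) * (0 + 1 * q2)) / ((q3 + x * q2) * (q3 + x * q2))) (at x)"
    by (intro DERIV_divide DERIV_add DERIV_cmult_right DERIV_ident DERIV_const den)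
  moreover have "((1 * q1) * (q3 + x * q2) - (x * q1) * (0 + 1 * q2)) / ((q3 + x * q2) * (q3 + x * q2))
     = q1 * q3 / (q3 + x * q2)^2" by (simp add: power2_eq_square algebra_simps)
  ultimately show ?thesis by simp
qed

lemma G_deriv:
  fixes t :: "real \<Rightarrow> real"
  assumes "(t has_real_derivative t') (at x)"
  shows "((\<lambda>\<delta>. c + t \<delta> * a + (t \<delta>)^2 * b2) has_real_derivative ((a + 2 * b2 * t x) * t')) (at x)"
proof -
  have "((\<lambda>\<delta>. c + t \<delta> * a + (t \<delta>)^2 * b2) has_real_derivative (0 + t' * a + (of_nat 2 * (t' * (t x)^(2 - Suc 0))) * b2)) (at x)"
    by (intro DERIV_add DERIV_cmult_right DERIV_const DERIV_power assms)
  then show ?thesis by (simp add: algebra_simps)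
qed

theorem theorem3:
  fixes N d :: nat and Q :: "nat \<Rightarrow> real mat" and b :: "nat \<Rightarrow> real vec"
    and p :: "nat \<Rightarrow> real" and k \<epsilon>1 :: real and M :: "nat set"
  assumes Qcar: "\<forall>i<N. Q i \<in> carrier_mat N N \<and> Q i = transpose_mat (Q i)"
    and bcar: "\<forall>i<N. b i \<in> carrier_vec N"
    and d: "d < N" "d \<noteq> 0"
    and k: "k > 0"
    and hur: "hurwitz ((- k) \<cdot>\<^sub>m calQ N Q)"
    and inv: "invertible_mat (mat_delete (calQ N Q) d 0)"
    and eps: "\<epsilon>1 \<noteq> 0"
    and M: "M \<subseteq> {..<N}"
    and Msgn: "\<forall>i\<in>M. r1 N Q b d i \<noteq> 0 \<and> sgn (r1 N Q b d i) = sgn (r1 N Q b d 0)"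
    and sign: "\<epsilon>1 * r1 N Q b d 0 * q1 N Q b d * q3 N Q d < 0"
  shows "Omega N Q b p d k \<epsilon>1 \<noteq> {} \<and>
    (\<exists>\<Omega>s \<subseteq> Omega N Q b p d k \<epsilon>1. \<Omega>s \<noteq> {} \<and>
      (\<forall>Jref \<in> \<Omega>s. \<exists>\<delta>s \<in> Delta1 N Q d k.
         Jcost Q b p 0 (xdelta N Q b d \<delta>s) = Jref \<and>
         (\<exists>D. ((\<lambda>\<delta>. Jcost Q b p 0 (xdelta N Q b d \<delta>)) has_real_derivative D) (at \<delta>s) \<and> \<epsilon>1 * D < 0) \<and>
         (\<forall>i \<in> M \<union> {0}. Jcost Q b p i (xdelta N Q b d \<delta>s) < Jcost Q b p i (xstar N Q b))))"
proof -
  have cQ: "calQ N Q \<in> carrier_mat N N" by (simp add: calQ_def)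
  have hQ: "\<forall>l. eigenvalue (map_mat complex_of_real (calQ N Q)) l \<longrightarrow> Re l > 0"
    using hurwitz_iff[OF cQ k] hur by simp
  have detQ: "det (calQ N Q) \<noteq> 0" by (rule det_from_eig[OF cQ hQ])
  have Mc: "mat_delete (calQ N Q) d 0 \<in> carrier_mat (N-1) (N-1)" using mat_delete_carrier[OF cQ] by simp
  have detM: "det (mat_delete (calQ N Q) d 0) \<noteq> 0" by (rule invertible_det[OF Mc inv])
  interpret S: setting N d Q b
    using Qcar bcar d detQ detM by unfold_locales auto
  let ?A = "map_mat complex_of_real (calQ N Q)"
  let ?B = "map_mat complex_of_real (barQ N Q d)"
  have A: "?A \<in> carrier_mat N N" using cQ by simp
  have B: "?B \<in> carrier_mat N N" using S.bQ by simp
  have Bz: "?B $$ (i,j) = 0" if "i < N" "j < N" "i \<noteq> d" for i j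
    using that by (simp add: barQ_def)
  obtain \<eta>0 where eta0: "\<eta>0 > 0"
    and pert: "\<forall>\<delta>::real. \<bar>\<delta>\<bar> < \<eta>0 \<longrightarrow> (\<forall>l. eigenvalue (?A + complex_of_real \<delta> \<cdot>\<^sub>m ?B) l \<longrightarrow> Re l > 0)"
    using perturb[OF A B d(1) Bz] hQ by blast
  have mapeq: "map_mat complex_of_real (calQd N Q d \<delta>) = ?A + complex_of_real \<delta> \<cdot>\<^sub>m ?B" for \<delta>
    by (intro eq_matI) (auto simp: calQd_def calQ_def barQ_def)
  have good: "\<delta> \<in> Delta1 N Q d k \<and> det (calQd N Q d \<delta>) \<noteq> 0" if "\<bar>\<delta>\<bar> < \<eta>0" for \<delta>
  proof -
    have e: "\<forall>l. eigenvalue (map_mat complex_of_real (calQd N Q d \<delta>)) l \<longrightarrow> Re l > 0"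
      unfolding mapeq using pert that by blast
    show ?thesis using hurwitz_iff[OF S.cQd k] e det_from_eig[OF S.cQd e] unfolding Delta1_def by simp
  qed
  have I: "finite (M \<union> {0})" "0 \<in> M \<union> {0}" using M finite_subset by auto
  have Isgn: "\<forall>i\<in>M \<union> {0}. r1 N Q b d i \<noteq> 0 \<and> sgn (r1 N Q b d i) = sgn (r1 N Q b d 0)"
    using Msgn sign by auto
  obtain \<delta>s \<eta>1 where ch: "0 < \<eta>1" "\<eta>1 \<le> \<eta>0" "\<bar>\<delta>s\<bar> < \<eta>1"
    "\<forall>\<delta>. \<bar>\<delta>\<bar> < \<eta>1 \<longrightarrow> q3 N Q d + \<delta> * q2 N Q d \<noteq> 0"
    "\<forall>i\<in>M \<union> {0}. r1 N Q b d i * (\<delta>s * q1 N Q b d / (q3 N Q d + \<delta>s * q2 N Q d))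
        + r2 N Q d i * (\<delta>s * q1 N Q b d / (q3 N Q d + \<delta>s * q2 N Q d))^2 < 0"
    "\<epsilon>1 * ((r1 N Q b d 0 + 2 * r2 N Q d 0 * (\<delta>s * q1 N Q b d / (q3 N Q d + \<delta>s * q2 N Q d)))
        * (q1 N Q b d * q3 N Q d / (q3 N Q d + \<delta>s * q2 N Q d)^2)) < 0"
    using choose_delta[OF I Isgn sign eta0, of "q2 N Q d" "r2 N Q d"] by blast
  define tt where "tt = (\<lambda>\<delta>. \<delta> * q1 N Q b d / (q3 N Q d + \<delta> * q2 N Q d))"
  have xd: "xdelta N Q b d \<delta> = xstar N Q b + tt \<delta> \<cdot>\<^sub>v Phi N Q d" if "\<bar>\<delta>\<bar> < \<eta>1" for \<delta>
  proof -
    have "\<bar>\<delta>\<bar> < \<eta>0" using that ch(2) by simp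
    then have g: "det (calQd N Q d \<delta>) \<noteq> 0" using good by blast
    have nz: "q3 N Q d + \<delta> * q2 N Q d \<noteq> 0" using ch(4) that by blast
    show ?thesis unfolding tt_def using S.xdelta_eq[OF g nz] by simp
  qed
  have Jexp: "Jcost Q b p i (xstar N Q b + t \<cdot>\<^sub>v Phi N Q d)
      = Jcost Q b p i (xstar N Q b) + t * r1 N Q b d i + t^2 * r2 N Q d i" if i: "i < N" for i t
    unfolding Jcost_def r1_def r2_def
    using cost_expand[of "Q i" N "xstar N Q b" "Phi N Q d" "b i" t "p i"] Qcar bcar i S.xs_car S.Phi_car
    by (simp add: algebra_simps)
  define G where "G = (\<lambda>\<delta>. Jcost Q b p 0 (xstar N Q b) + tt \<delta> * r1 N Q b d 0 + (tt \<delta>)^2 * r2 N Q d 0)"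
  have N0: "0 < N" using d by simp
  have GJ: "Jcost Q b p 0 (xdelta N Q b d \<delta>) = G \<delta>" if "\<delta> \<in> {\<delta>. \<bar>\<delta>\<bar> < \<eta>1}" for \<delta>
    using that xd Jexp[OF N0] unfolding G_def by simp
  define D where "D = (r1 N Q b d 0 + 2 * r2 N Q d 0 * tt \<delta>s) * (q1 N Q b d * q3 N Q d / (q3 N Q d + \<delta>s * q2 N Q d)^2)"
  have den: "q3 N Q d + \<delta>s * q2 N Q d \<noteq> 0" using ch by blast
  have dt: "(tt has_real_derivative (q1 N Q b d * q3 N Q d / (q3 N Q d + \<delta>s * q2 N Q d)^2)) (at \<delta>s)"
    unfolding tt_def by (rule tt_deriv[OF den])
  have dG: "(G has_real_derivative D) (at \<delta>s)"
    unfolding G_def D_def by (rule G_deriv[OF dt])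
  have opn: "open {\<delta>::real. \<bar>\<delta>\<bar> < \<eta>1}"
    by (rule open_Collect_less) (auto intro!: continuous_intros)
  have dJ: "((\<lambda>\<delta>. Jcost Q b p 0 (xdelta N Q b d \<delta>)) has_real_derivative D) (at \<delta>s)"
    by (rule has_field_derivative_transform_within_open[OF dG, of "{\<delta>. \<bar>\<delta>\<bar> < \<eta>1}"])
       (use ch GJ opn in auto)
  have dneg: "\<epsilon>1 * D < 0" unfolding D_def tt_def using ch(6) by simp
  have dsD: "\<delta>s \<in> Delta1 N Q d k" using good ch by simp
  have costs: "\<forall>i \<in> M \<union> {0}. Jcost Q b p i (xdelta N Q b d \<delta>s) < Jcost Q b p i (xstar N Q b)"
  proof
    fix i assume i: "i \<in> M \<union> {0}"
    then have iN: "i < N" using M N0 by auto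
    have "Jcost Q b p i (xdelta N Q b d \<delta>s) = Jcost Q b p i (xstar N Q b) + tt \<delta>s * r1 N Q b d i + (tt \<delta>s)^2 * r2 N Q d i"
      using xd[OF ch(3)] Jexp[OF iN] by simp
    moreover have "r1 N Q b d i * tt \<delta>s + r2 N Q d i * (tt \<delta>s)^2 < 0" using ch(5) i unfolding tt_def by blast
    ultimately show "Jcost Q b p i (xdelta N Q b d \<delta>s) < Jcost Q b p i (xstar N Q b)" by (simp add: algebra_simps)
  qed
  have att: "Jcost Q b p 0 (xdelta N Q b d \<delta>s) \<in> Omega N Q b p d k \<epsilon>1"
    unfolding Omega_def attainable_def using dsD dJ dneg by blast
  show ?thesis
    apply (intro conjI)
    subgoal using att by blast
    apply (rule exI[of _ "{Jcost Q b p 0 (xdelta N Q b d \<delta>s)}"])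
    using att dsD dJ dneg costs by blast
qed

end
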